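(* The quadric surface $Q$ meets the octic $R$ only within the singular locus of $R$; in fact $$Q\cap R\subset S_{(x_0,x_1)}\cup S_{(x_0,x_2)}\cup S_{(x_1,x_2)}\cup S_{(x_3,x_4)}.$$
   Context: Let $\Delta'(x_0,\ldots,x_4):=\prod_{i_1,\ldots,i_4\in\{0,1\}}\big(\sqrt{x_0}+(-1)^{i_1}\sqrt{x_1}+\cdots+(-1)^{i_4}\sqrt{x_4}\big)\in\mathbb{Q}[x_0,\ldots,x_4]$ (degree $8$), and let $R\subset\mathbf{P}^4$ be the octic threefold $\Delta'=0$. $Q\subset\mathbf{P}^4$ is the quadric surface $l=q=0$ with $l:=x_0+x_1+x_2-3x_3-3x_4$ and $q:=x_0^2+x_1^2+x_2^2+9x_3^2-x_0x_1-x_0x_2-3x_0x_3-x_1x_2-3x_1x_3-3x_2x_3$. For $0\le i<j\le4$, $S_{(x_i,x_j)}\subset\mathbf{P}^4$ is the surface given by $x_i=x_j$ and $x_k^2+x_l^2+x_m^2-2x_kx_l-2x_kx_m-2x_lx_m=0$, where $\{k,l,m\}=\{0,\ldots,4\}\setminus\{i,j\}$. *)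

theory Defs
  imports Complex_Main
begin

definition sgn_bool :: "bool \<Rightarrow> complex" where
  "sgn_bool b = (if b then -1 else 1)"

text \<open>The product is invariant under the choice of
  square roots, so it is the value of the polynomial Delta'.\<close>
definition Delta' :: "complex \<Rightarrow> complex \<Rightarrow> complex \<Rightarrow> complex \<Rightarrow> complex \<Rightarrow> complex" where
  "Delta' x0 x1 x2 x3 x4 =
     (\<Prod>e \<in> (UNIV :: (bool \<times> bool \<times> bool \<times> bool) set).
        csqrt x0 + sgn_bool (fst e) * csqrt x1 + sgn_bool (fst (snd e)) * csqrt x2
        + sgn_bool (fst (snd (snd e))) * csqrt x3 + sgn_bool (snd (snd (snd e))) * csqrt x4)"

definition lQ :: "complex \<Rightarrow> complex \<Rightarrow> complex \<Rightarrow> complex \<Rightarrow> complex \<Rightarrow> complex" where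
  "lQ x0 x1 x2 x3 x4 = x0 + x1 + x2 - 3*x3 - 3*x4"

definition qQ :: "complex \<Rightarrow> complex \<Rightarrow> complex \<Rightarrow> complex \<Rightarrow> complex \<Rightarrow> complex" where
  "qQ x0 x1 x2 x3 x4 = x0^2 + x1^2 + x2^2 + 9*x3^2 - x0*x1 - x0*x2 - 3*x0*x3
      - x1*x2 - 3*x1*x3 - 3*x2*x3"

definition qS :: "complex \<Rightarrow> complex \<Rightarrow> complex \<Rightarrow> complex" where
  "qS a b c = a^2 + b^2 + c^2 - 2*a*b - 2*a*c - 2*b*c"

definition sing_R :: "complex \<Rightarrow> complex \<Rightarrow> complex \<Rightarrow> complex \<Rightarrow> complex \<Rightarrow> bool" where
  "sing_R x0 x1 x2 x3 x4 \<longleftrightarrow> Delta' x0 x1 x2 x3 x4 = 0 \<and>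
     ((\<lambda>t. Delta' (x0 + t) x1 x2 x3 x4) has_field_derivative 0) (at 0) \<and>
     ((\<lambda>t. Delta' x0 (x1 + t) x2 x3 x4) has_field_derivative 0) (at 0) \<and>
     ((\<lambda>t. Delta' x0 x1 (x2 + t) x3 x4) has_field_derivative 0) (at 0) \<and>
     ((\<lambda>t. Delta' x0 x1 x2 (x3 + t) x4) has_field_derivative 0) (at 0) \<and>
     ((\<lambda>t. Delta' x0 x1 x2 x3 (x4 + t)) has_field_derivative 0) (at 0)"

end

theory Submission
  imports Defs
begin

lemma key:
  fixes b0 b1 b2 b3 b4 :: complex
  assumes s: "b0+b1+b2+b3+b4 = 0"
    and l: "lQ (b0^2) (b1^2) (b2^2) (b3^2) (b4^2) = 0"
    and q: "qQ (b0^2) (b1^2) (b2^2) (b3^2) (b4^2) = 0"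
  shows "(b0+b1)*(b0+b2)*(b1+b2)*(b3+b4) = 0"
proof -
  have b4: "b4 = -(b0+b1+b2+b3)" using s by (simp add: algebra_simps eq_neg_iff_add_eq_0)
  show ?thesis using l q unfolding b4 lQ_def qQ_def by algebra
qed

lemma G:
  fixes C :: "'a \<Rightarrow> complex"
  assumes "finite Y" "ya \<in> Y" "yb \<in> Y" "ya \<noteq> yb" "C ya = 0" "C yb = 0"
  shows "((\<lambda>t. \<Prod>y\<in>Y. C y + k*t) has_field_derivative 0) (at 0)"
proof -
  have d: "((\<lambda>t. \<Prod>y\<in>Y. C y + k*t) has_field_derivative (\<Sum>x\<in>Y. k * (\<Prod>y\<in>Y-{x}. C y + k*0))) (at 0)"
    by (rule has_field_derivative_prod) (auto intro!: derivative_eq_intros)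
  have "(\<Prod>y\<in>Y-{x}. C y + k*0) = 0" if "x \<in> Y" for x
  proof (cases "x = ya")
    case True
    then have "yb \<in> Y - {x}" using assms by auto
    then show ?thesis using assms by (auto intro!: prod_zero)
  next
    case False
    then have "ya \<in> Y - {x}" using assms by auto
    then show ?thesis using assms by (auto intro!: prod_zero)
  qed
  then have "(\<Sum>x\<in>Y. k * (\<Prod>y\<in>Y-{x}. C y + k*0)) = 0" by simp
  with d show ?thesis by simp
qed

lemma prod_split:
  fixes g :: "'e::finite \<Rightarrow> complex" and \<pi> :: "('b::finite \<times> bool) \<Rightarrow> 'e"
  assumes "\<And>e. \<pi> (\<rho> e) = e" "\<And>z. \<rho> (\<pi> z) = z"
  shows "(\<Prod>e\<in>UNIV. g e) = (\<Prod>y\<in>UNIV. g (\<pi> (y,True)) * g (\<pi> (y,False)))"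
proof -
  have "(\<Prod>e\<in>UNIV. g e) = (\<Prod>z\<in>UNIV. g (\<pi> z))"
    by (rule prod.reindex_bij_witness[where i=\<pi> and j=\<rho>]) (auto simp: assms)
  also have "\<dots> = (\<Prod>z\<in>UNIV \<times> UNIV. g (\<pi> z))" by simp
  also have "\<dots> = (\<Prod>y\<in>UNIV. \<Prod>b\<in>UNIV. g (\<pi> (y,b)))"
    by (simp add: prod.cartesian_product)
  also have "\<dots> = (\<Prod>y\<in>UNIV. g (\<pi> (y,True)) * g (\<pi> (y,False)))"
    by (simp add: UNIV_bool mult.commute)
  finally show ?thesis .
qed

definition fac :: "bool \<times> bool \<times> bool \<times> bool \<Rightarrow> complex \<Rightarrow> complex \<Rightarrow> complex \<Rightarrow> complex \<Rightarrow> complex \<Rightarrow> complex" where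
  "fac e x0 x1 x2 x3 x4 = csqrt x0 + sgn_bool (fst e) * csqrt x1 + sgn_bool (fst (snd e)) * csqrt x2
        + sgn_bool (fst (snd (snd e))) * csqrt x3 + sgn_bool (snd (snd (snd e))) * csqrt x4"

lemma Delta'_fac: "Delta' x0 x1 x2 x3 x4 = (\<Prod>e\<in>UNIV. fac e x0 x1 x2 x3 x4)"
  unfolding Delta'_def fac_def ..

lemma sq_sgn: "sgn_bool b * sgn_bool b = 1" by (simp add: sgn_bool_def)

lemma pair_sq: "(B + s * a) * (B - s * a) = B*B - (s*s)*(a*a)" for B s a :: complex
  by (simp add: algebra_simps)

lemma csq: "csqrt x * csqrt x = x" by (metis power2_csqrt power2_eq_square)

lemma split1: "(\<Prod>e\<in>UNIV. g e) = (\<Prod>y\<in>UNIV. g (True,y) * g (False,y))"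
  for g :: "bool \<times> 'b::finite \<Rightarrow> complex"
  using prod_split[where \<pi>="\<lambda>z. (snd z, fst z)" and \<rho>="\<lambda>z. (snd z, fst z)" and g=g] by simp

lemma deriv1:
  assumes "fac e x0 x1 x2 x3 x4 = 0" "fac e' x0 x1 x2 x3 x4 = 0" "snd e \<noteq> snd e'"
  shows "((\<lambda>t. Delta' x0 (x1+t) x2 x3 x4) has_field_derivative 0) (at 0)"
proof -
  define B where "B y = csqrt x0 + sgn_bool (fst y) * csqrt x2
        + sgn_bool (fst (snd y)) * csqrt x3 + sgn_bool (snd (snd y)) * csqrt x4" for y
  have f: "fac (b,y) x0 z x2 x3 x4 = B y + sgn_bool b * csqrt z" for b y z
    by (simp add: fac_def B_def algebra_simps)
  have eq: "Delta' x0 (x1+t) x2 x3 x4 = (\<Prod>y\<in>UNIV. (B y * B y - x1) + (-1)*t)" for t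
  proof -
    have "Delta' x0 (x1+t) x2 x3 x4 = (\<Prod>y\<in>UNIV. fac (True,y) x0 (x1+t) x2 x3 x4 * fac (False,y) x0 (x1+t) x2 x3 x4)"
      unfolding Delta'_fac by (rule split1)
    also have "\<dots> = (\<Prod>y\<in>UNIV. (B y * B y - x1) + (-1)*t)"
      by (rule prod.cong) (auto simp: f sgn_bool_def csq algebra_simps)
    finally show ?thesis .
  qed
  have z: "B (snd e) * B (snd e) - x1 = 0" if "fac e x0 x1 x2 x3 x4 = 0" for e
  proof -
    obtain b y where e: "e = (b,y)" by (cases e)
    have "B y = - sgn_bool b * csqrt x1" using that f[where b=b and y=y and z=x1] e by (simp add: add_eq_0_iff2)
    then have "B y * B y = (sgn_bool b * sgn_bool b) * (csqrt x1 * csqrt x1)" by (simp add: algebra_simps)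
    then show ?thesis using e by (simp add: sq_sgn csq)
  qed
  show ?thesis unfolding eq
    by (rule G[where ya="snd e" and yb="snd e'"]) (use assms z in auto)
qed

lemma split2: "(\<Prod>e\<in>UNIV. g e) = (\<Prod>y\<in>UNIV. g (fst y, True, snd y) * g (fst y, False, snd y))"
  for g :: "bool \<times> bool \<times> bool \<times> bool \<Rightarrow> complex"
  using prod_split[where \<pi>="\<lambda>z. (fst (fst z), snd z, snd (fst z))" and \<rho>="\<lambda>e. ((fst e, snd (snd e)), fst (snd e))" and g=g] by simp

lemma deriv2:
  assumes "fac e x0 x1 x2 x3 x4 = 0" "fac e' x0 x1 x2 x3 x4 = 0" "fst ((fst e, snd (snd e)), fst (snd e)) \<noteq> fst ((fst e', snd (snd e')), fst (snd e'))"
  shows "((\<lambda>t. Delta' x0 x1 (x2+t) x3 x4) has_field_derivative 0) (at 0)"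
proof -
  define B where "B y = csqrt x0 + sgn_bool (fst y) * csqrt x1
        + sgn_bool (fst (snd y)) * csqrt x3 + sgn_bool (snd (snd y)) * csqrt x4" for y
  have f: "fac (fst y, b, snd y) x0 x1 z x3 x4 = B y + sgn_bool b * csqrt z" for b y z
    by (simp add: fac_def B_def algebra_simps)
  have eq: "Delta' x0 x1 (x2+t) x3 x4 = (\<Prod>y\<in>UNIV. (B y * B y - x2) + (-1)*t)" for t
  proof -
    have "Delta' x0 x1 (x2+t) x3 x4 = (\<Prod>y\<in>UNIV. fac (fst y, True, snd y) x0 x1 (x2+t) x3 x4 * fac (fst y, False, snd y) x0 x1 (x2+t) x3 x4)"
      unfolding Delta'_fac by (rule split2)
    also have "\<dots> = (\<Prod>y\<in>UNIV. (B y * B y - x2) + (-1)*t)"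
      by (rule prod.cong) (auto simp: f sgn_bool_def csq algebra_simps)
    finally show ?thesis .
  qed
  have z: "B (fst ((fst e, snd (snd e)), fst (snd e))) * B (fst ((fst e, snd (snd e)), fst (snd e))) - x2 = 0" if "fac e x0 x1 x2 x3 x4 = 0" for e
  proof -
    obtain a1 a2 a3 a4 where e: "e = (a1,a2,a3,a4)" by (cases e) auto
    define b where "b = a2"
    define y where "y = (a1,a3,a4)"
    have y: "y = fst ((fst e, snd (snd e)), fst (snd e))" by (simp add: e y_def)
    have "fac e x0 x1 x2 x3 x4 = B y + sgn_bool b * csqrt x2" using f[where b=b and y=y and z=x2] by (simp add: e y_def b_def)
    then have "B y + sgn_bool b * csqrt x2 = 0" using that by simp
    then have "B y = - sgn_bool b * csqrt x2" by (simp add: eq_neg_iff_add_eq_0)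
    then have "B y * B y = (sgn_bool b * sgn_bool b) * (csqrt x2 * csqrt x2)" by (simp add: algebra_simps)
    then show ?thesis using y by (simp add: sq_sgn csq)
  qed
  show ?thesis unfolding eq
    by (rule G[where ya="fst ((fst e, snd (snd e)), fst (snd e))" and yb="fst ((fst e', snd (snd e')), fst (snd e'))"]) (use assms z in auto)
qed

lemma split3: "(\<Prod>e\<in>UNIV. g e) = (\<Prod>y\<in>UNIV. g (fst y, fst (snd y), True, snd (snd y)) * g (fst y, fst (snd y), False, snd (snd y)))"
  for g :: "bool \<times> bool \<times> bool \<times> bool \<Rightarrow> complex"
  using prod_split[where \<pi>="\<lambda>z. (fst (fst z), fst (snd (fst z)), snd z, snd (snd (fst z)))" and \<rho>="\<lambda>e. ((fst e, fst (snd e), snd (snd (snd e))), fst (snd (snd e)))" and g=g] by simp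

lemma deriv3:
  assumes "fac e x0 x1 x2 x3 x4 = 0" "fac e' x0 x1 x2 x3 x4 = 0" "fst ((fst e, fst (snd e), snd (snd (snd e))), fst (snd (snd e))) \<noteq> fst ((fst e', fst (snd e'), snd (snd (snd e'))), fst (snd (snd e')))"
  shows "((\<lambda>t. Delta' x0 x1 x2 (x3+t) x4) has_field_derivative 0) (at 0)"
proof -
  define B where "B y = csqrt x0 + sgn_bool (fst y) * csqrt x1
        + sgn_bool (fst (snd y)) * csqrt x2 + sgn_bool (snd (snd y)) * csqrt x4" for y
  have f: "fac (fst y, fst (snd y), b, snd (snd y)) x0 x1 x2 z x4 = B y + sgn_bool b * csqrt z" for b y z
    by (simp add: fac_def B_def algebra_simps)
  have eq: "Delta' x0 x1 x2 (x3+t) x4 = (\<Prod>y\<in>UNIV. (B y * B y - x3) + (-1)*t)" for t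
  proof -
    have "Delta' x0 x1 x2 (x3+t) x4 = (\<Prod>y\<in>UNIV. fac (fst y, fst (snd y), True, snd (snd y)) x0 x1 x2 (x3+t) x4 * fac (fst y, fst (snd y), False, snd (snd y)) x0 x1 x2 (x3+t) x4)"
      unfolding Delta'_fac by (rule split3)
    also have "\<dots> = (\<Prod>y\<in>UNIV. (B y * B y - x3) + (-1)*t)"
      by (rule prod.cong) (auto simp: f sgn_bool_def csq algebra_simps)
    finally show ?thesis .
  qed
  have z: "B (fst ((fst e, fst (snd e), snd (snd (snd e))), fst (snd (snd e)))) * B (fst ((fst e, fst (snd e), snd (snd (snd e))), fst (snd (snd e)))) - x3 = 0" if "fac e x0 x1 x2 x3 x4 = 0" for e
  proof -
    obtain a1 a2 a3 a4 where e: "e = (a1,a2,a3,a4)" by (cases e) auto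
    define b where "b = a3"
    define y where "y = (a1,a2,a4)"
    have y: "y = fst ((fst e, fst (snd e), snd (snd (snd e))), fst (snd (snd e)))" by (simp add: e y_def)
    have "fac e x0 x1 x2 x3 x4 = B y + sgn_bool b * csqrt x3" using f[where b=b and y=y and z=x3] by (simp add: e y_def b_def)
    then have "B y + sgn_bool b * csqrt x3 = 0" using that by simp
    then have "B y = - sgn_bool b * csqrt x3" by (simp add: eq_neg_iff_add_eq_0)
    then have "B y * B y = (sgn_bool b * sgn_bool b) * (csqrt x3 * csqrt x3)" by (simp add: algebra_simps)
    then show ?thesis using y by (simp add: sq_sgn csq)
  qed
  show ?thesis unfolding eq
    by (rule G[where ya="fst ((fst e, fst (snd e), snd (snd (snd e))), fst (snd (snd e)))" and yb="fst ((fst e', fst (snd e'), snd (snd (snd e'))), fst (snd (snd e')))"]) (use assms z in auto)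
qed

lemma split4: "(\<Prod>e\<in>UNIV. g e) = (\<Prod>y\<in>UNIV. g (fst y, fst (snd y), snd (snd y), True) * g (fst y, fst (snd y), snd (snd y), False))"
  for g :: "bool \<times> bool \<times> bool \<times> bool \<Rightarrow> complex"
  using prod_split[where \<pi>="\<lambda>z. (fst (fst z), fst (snd (fst z)), snd (snd (fst z)), snd z)" and \<rho>="\<lambda>e. ((fst e, fst (snd e), fst (snd (snd e))), snd (snd (snd e)))" and g=g] by simp

lemma deriv4:
  assumes "fac e x0 x1 x2 x3 x4 = 0" "fac e' x0 x1 x2 x3 x4 = 0" "fst ((fst e, fst (snd e), fst (snd (snd e))), snd (snd (snd e))) \<noteq> fst ((fst e', fst (snd e'), fst (snd (snd e'))), snd (snd (snd e')))"
  shows "((\<lambda>t. Delta' x0 x1 x2 x3 (x4+t)) has_field_derivative 0) (at 0)"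
proof -
  define B where "B y = csqrt x0 + sgn_bool (fst y) * csqrt x1
        + sgn_bool (fst (snd y)) * csqrt x2 + sgn_bool (snd (snd y)) * csqrt x3" for y
  have f: "fac (fst y, fst (snd y), snd (snd y), b) x0 x1 x2 x3 z = B y + sgn_bool b * csqrt z" for b y z
    by (simp add: fac_def B_def algebra_simps)
  have eq: "Delta' x0 x1 x2 x3 (x4+t) = (\<Prod>y\<in>UNIV. (B y * B y - x4) + (-1)*t)" for t
  proof -
    have "Delta' x0 x1 x2 x3 (x4+t) = (\<Prod>y\<in>UNIV. fac (fst y, fst (snd y), snd (snd y), True) x0 x1 x2 x3 (x4+t) * fac (fst y, fst (snd y), snd (snd y), False) x0 x1 x2 x3 (x4+t))"
      unfolding Delta'_fac by (rule split4)
    also have "\<dots> = (\<Prod>y\<in>UNIV. (B y * B y - x4) + (-1)*t)"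
      by (rule prod.cong) (auto simp: f sgn_bool_def csq algebra_simps)
    finally show ?thesis .
  qed
  have z: "B (fst ((fst e, fst (snd e), fst (snd (snd e))), snd (snd (snd e)))) * B (fst ((fst e, fst (snd e), fst (snd (snd e))), snd (snd (snd e)))) - x4 = 0" if "fac e x0 x1 x2 x3 x4 = 0" for e
  proof -
    obtain a1 a2 a3 a4 where e: "e = (a1,a2,a3,a4)" by (cases e) auto
    define b where "b = a4"
    define y where "y = (a1,a2,a3)"
    have y: "y = fst ((fst e, fst (snd e), fst (snd (snd e))), snd (snd (snd e)))" by (simp add: e y_def)
    have "fac e x0 x1 x2 x3 x4 = B y + sgn_bool b * csqrt x4" using f[where b=b and y=y and z=x4] by (simp add: e y_def b_def)
    then have "B y + sgn_bool b * csqrt x4 = 0" using that by simp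
    then have "B y = - sgn_bool b * csqrt x4" by (simp add: eq_neg_iff_add_eq_0)
    then have "B y * B y = (sgn_bool b * sgn_bool b) * (csqrt x4 * csqrt x4)" by (simp add: algebra_simps)
    then show ?thesis using y by (simp add: sq_sgn csq)
  qed
  show ?thesis unfolding eq
    by (rule G[where ya="fst ((fst e, fst (snd e), fst (snd (snd e))), snd (snd (snd e)))" and yb="fst ((fst e', fst (snd e'), fst (snd (snd e'))), snd (snd (snd e')))"]) (use assms z in auto)
qed

definition negv :: "bool \<times> bool \<times> bool \<Rightarrow> bool \<times> bool \<times> bool" where
  "negv y = (\<not> fst y, \<not> fst (snd y), \<not> snd (snd y))"

lemma negv_negv[simp]: "negv (negv y) = y" by (simp add: negv_def)

definition y0 :: "bool \<times> bool \<times> bool \<times> bool \<Rightarrow> bool \<times> bool \<times> bool" where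
  "y0 e = (if fst e then negv (snd e) else snd e)"

lemma split0: "(\<Prod>e\<in>UNIV. g e) = (\<Prod>y\<in>UNIV. g (True, negv y) * g (False, y))"
  for g :: "bool \<times> bool \<times> bool \<times> bool \<Rightarrow> complex"
proof -
  define p where "p = (\<lambda>z. if snd z then (True, negv (fst z)) else (False, fst z))"
  define r where "r = (\<lambda>e. (if fst e then negv (snd e) else snd e, fst e))"
  have "(\<Prod>e\<in>UNIV. g e) = (\<Prod>y\<in>UNIV. g (p (y,True)) * g (p (y,False)))"
  proof (rule prod_split[where \<rho>=r])
    fix e :: "bool \<times> bool \<times> bool \<times> bool"
    show "p (r e) = e" by (cases "fst e") (auto simp: p_def r_def prod_eq_iff)
  next
    fix z :: "(bool \<times> bool \<times> bool) \<times> bool"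
    show "r (p z) = z" by (cases "snd z") (auto simp: p_def r_def prod_eq_iff)
  qed
  then show ?thesis by (simp add: p_def)
qed

lemma deriv0:
  assumes "fac e x0 x1 x2 x3 x4 = 0" "fac e' x0 x1 x2 x3 x4 = 0" "y0 e \<noteq> y0 e'"
  shows "((\<lambda>t. Delta' (x0+t) x1 x2 x3 x4) has_field_derivative 0) (at 0)"
proof -
  define B where "B y = sgn_bool False * csqrt x1 + sgn_bool (fst y) * csqrt x2
        + sgn_bool (fst (snd y)) * csqrt x3 + sgn_bool (snd (snd y)) * csqrt x4" for y
  have f1: "fac (False,y) z x1 x2 x3 x4 = csqrt z + B y" for y z
    by (simp add: fac_def B_def algebra_simps)
  have f2: "fac (True,negv y) z x1 x2 x3 x4 = csqrt z - B y" for y z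
    by (simp add: fac_def B_def negv_def sgn_bool_def algebra_simps)
  have eq: "Delta' (x0+t) x1 x2 x3 x4 = (\<Prod>y\<in>UNIV. (x0 - B y * B y) + 1*t)" for t
  proof -
    have "Delta' (x0+t) x1 x2 x3 x4 = (\<Prod>y\<in>UNIV. fac (True, negv y) (x0+t) x1 x2 x3 x4 * fac (False,y) (x0+t) x1 x2 x3 x4)"
      unfolding Delta'_fac by (rule split0)
    also have "\<dots> = (\<Prod>y\<in>UNIV. (x0 - B y * B y) + 1*t)"
      by (rule prod.cong) (auto simp: f1 f2 csq algebra_simps)
    finally show ?thesis .
  qed
  have z: "x0 - B (y0 e) * B (y0 e) = 0" if "fac e x0 x1 x2 x3 x4 = 0" for e
  proof (cases "fst e")
    case True
    define w where "w = snd e"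
    have e: "e = (True, w)" using True by (simp add: prod_eq_iff w_def)
    have "fac (True, negv (negv w)) x0 x1 x2 x3 x4 = 0" using that e by simp
    then have "csqrt x0 = B (negv w)" unfolding f2 by simp
    then show ?thesis using e csq[of x0] by (simp add: y0_def)
  next
    case False
    define w where "w = snd e"
    have e: "e = (False, w)" using False by (simp add: prod_eq_iff w_def)
    have "csqrt x0 = - B w" using that e f1[of w x0] by (simp add: add_eq_0_iff2)
    then have "csqrt x0 * csqrt x0 = B w * B w" by simp
    then show ?thesis using e csq[of x0] by (simp add: y0_def)
  qed
  show ?thesis unfolding eq
    by (rule G[where ya="y0 e" and yb="y0 e'"]) (use assms z in auto)
qed

lemma sing_of:
  assumes "Delta' x0 x1 x2 x3 x4 = 0" "fac e x0 x1 x2 x3 x4 = 0" "fac e' x0 x1 x2 x3 x4 = 0"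
    "y0 e \<noteq> y0 e'" "snd e \<noteq> snd e'"
    "fst ((fst e, snd (snd e)), fst (snd e)) \<noteq> fst ((fst e', snd (snd e')), fst (snd e'))"
    "fst ((fst e, fst (snd e), snd (snd (snd e))), fst (snd (snd e))) \<noteq> fst ((fst e', fst (snd e'), snd (snd (snd e'))), fst (snd (snd e')))"
    "fst ((fst e, fst (snd e), fst (snd (snd e))), snd (snd (snd e))) \<noteq> fst ((fst e', fst (snd e'), fst (snd (snd e'))), snd (snd (snd e')))"
  shows "sing_R x0 x1 x2 x3 x4"
  unfolding sing_R_def
  using assms(1) deriv0[OF assms(2,3,4)] deriv1[OF assms(2,3,5)] deriv2[OF assms(2,3,6)]
    deriv3[OF assms(2,3,7)] deriv4[OF assms(2,3,8)] by blast

lemma sgn_not: "sgn_bool (\<not> b) = - sgn_bool b" by (simp add: sgn_bool_def)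

lemma qS_zero: "a + b + c = 0 \<Longrightarrow> qS (a^2) (b^2) (c^2) = 0" for a b c :: complex
proof -
  assume "a + b + c = 0"
  then have "c = -(a+b)" by (simp only: add_eq_0_iff)
  then show ?thesis unfolding qS_def by algebra
qed

theorem mainTheorem12:
  fixes x0 x1 x2 x3 x4 :: complex
  assumes "\<not> (x0 = 0 \<and> x1 = 0 \<and> x2 = 0 \<and> x3 = 0 \<and> x4 = 0)"
    and "lQ x0 x1 x2 x3 x4 = 0" and "qQ x0 x1 x2 x3 x4 = 0"
    and "Delta' x0 x1 x2 x3 x4 = 0"
  shows "sing_R x0 x1 x2 x3 x4 \<and>
    ((x0 = x1 \<and> qS x2 x3 x4 = 0) \<or> (x0 = x2 \<and> qS x1 x3 x4 = 0) \<or>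
     (x1 = x2 \<and> qS x0 x3 x4 = 0) \<or> (x3 = x4 \<and> qS x0 x1 x2 = 0))"
proof -
  obtain e where fe: "fac e x0 x1 x2 x3 x4 = 0"
    using assms(4) unfolding Delta'_fac by (auto simp: prod_zero_iff)
  obtain e1 e2 e3 e4 where e: "e = (e1,e2,e3,e4)" by (cases e) auto
  define b0 where "b0 = csqrt x0"
  define b1 where "b1 = sgn_bool e1 * csqrt x1"
  define b2 where "b2 = sgn_bool e2 * csqrt x2"
  define b3 where "b3 = sgn_bool e3 * csqrt x3"
  define b4 where "b4 = sgn_bool e4 * csqrt x4"
  have sq: "b^2 = x" if "b = sgn_bool s * csqrt x" for b s x
    using that sq_sgn[of s] csq[of x] by (simp add: power2_eq_square algebra_simps)
  have s0: "b0^2 = x0" using sq[of b0 True x0] by (simp add: b0_def sgn_bool_def)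
  have s1: "b1^2 = x1" using sq b1_def by blast
  have s2: "b2^2 = x2" using sq b2_def by blast
  have s3: "b3^2 = x3" using sq b3_def by blast
  have s4: "b4^2 = x4" using sq b4_def by blast
  have sum: "b0+b1+b2+b3+b4 = 0" using fe e by (simp add: fac_def b0_def b1_def b2_def b3_def b4_def)
  have sw: "sgn_bool f * c = (if f = g then sgn_bool g * c else - (sgn_bool g * c))" for f g and c :: complex
    by (cases f; cases g) (simp_all add: sgn_bool_def)
  have facf: "fac (f1,f2,f3,f4) x0 x1 x2 x3 x4 = b0 + (if f1 = e1 then b1 else -b1) + (if f2 = e2 then b2 else -b2)
     + (if f3 = e3 then b3 else -b3) + (if f4 = e4 then b4 else -b4)" for f1 f2 f3 f4
    unfolding fac_def fst_conv snd_conv b0_def b1_def b2_def b3_def b4_def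
    by (subst sw[where f=f1 and g=e1], subst sw[where f=f2 and g=e2], subst sw[where f=f3 and g=e3], subst sw[where f=f4 and g=e4]) simp
  have "(b0+b1)*(b0+b2)*(b1+b2)*(b3+b4) = 0"
    by (rule key[OF sum]) (use assms(2,3) s0 s1 s2 s3 s4 in auto)
  then consider "b0+b1 = 0" | "b0+b2 = 0" | "b1+b2 = 0" | "b3+b4 = 0" by auto
  then show ?thesis
  proof cases
    case 1
    have "b2+b3+b4 = (b0+b1+b2+b3+b4) - (b0+b1)" by (simp add: algebra_simps)
    then have z: "b2+b3+b4 = 0" using 1 sum by simp
    have "b0 = - b1" using 1 by (simp add: add_eq_0_iff2)
    then have "x0 = x1" using s0 s1 by simp
    moreover have "qS x2 x3 x4 = 0" using qS_zero[OF z] s2 s3 s4 by simp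
    moreover have "sing_R x0 x1 x2 x3 x4"
    proof -
      have "fac (e1, \<not>e2, \<not>e3, \<not>e4) x0 x1 x2 x3 x4 = (b0+b1) - (b2+b3+b4)" by (simp add: facf algebra_simps)
      then have h: "fac (e1, \<not>e2, \<not>e3, \<not>e4) x0 x1 x2 x3 x4 = 0" using 1 z by simp
      show ?thesis by (rule sing_of[OF assms(4) fe h]) (simp_all add: e y0_def negv_def)
    qed
    ultimately show ?thesis by blast
  next
    case 2
    have "b1+b3+b4 = (b0+b1+b2+b3+b4) - (b0+b2)" by (simp add: algebra_simps)
    then have z: "b1+b3+b4 = 0" using 2 sum by simp
    have "b0 = - b2" using 2 by (simp add: add_eq_0_iff2)
    then have "x0 = x2" using s0 s2 by simp
    moreover have "qS x1 x3 x4 = 0" using qS_zero[OF z] s1 s3 s4 by simp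
    moreover have "sing_R x0 x1 x2 x3 x4"
    proof -
      have "fac (\<not>e1, e2, \<not>e3, \<not>e4) x0 x1 x2 x3 x4 = (b0+b2) - (b1+b3+b4)" by (simp add: facf algebra_simps)
      then have h: "fac (\<not>e1, e2, \<not>e3, \<not>e4) x0 x1 x2 x3 x4 = 0" using 2 z by simp
      show ?thesis by (rule sing_of[OF assms(4) fe h]) (simp_all add: e y0_def negv_def)
    qed
    ultimately show ?thesis by blast
  next
    case 3
    have "b0+b3+b4 = (b0+b1+b2+b3+b4) - (b1+b2)" by (simp add: algebra_simps)
    then have z: "b0+b3+b4 = 0" using 3 sum by simp
    have "b1 = - b2" using 3 by (simp add: add_eq_0_iff2)
    then have "x1 = x2" using s1 s2 by simp
    moreover have "qS x0 x3 x4 = 0" using qS_zero[OF z] s0 s3 s4 by simp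
    moreover have "sing_R x0 x1 x2 x3 x4"
    proof -
      have "fac (\<not>e1, \<not>e2, e3, e4) x0 x1 x2 x3 x4 = (b0+b3+b4) - (b1+b2)" by (simp add: facf algebra_simps)
      then have h: "fac (\<not>e1, \<not>e2, e3, e4) x0 x1 x2 x3 x4 = 0" using 3 z by simp
      show ?thesis by (rule sing_of[OF assms(4) fe h]) (simp_all add: e y0_def negv_def)
    qed
    ultimately show ?thesis by blast
  next
    case 4
    have "b0+b1+b2 = (b0+b1+b2+b3+b4) - (b3+b4)" by (simp add: algebra_simps)
    then have z: "b0+b1+b2 = 0" using 4 sum by simp
    have "b3 = - b4" using 4 by (simp add: add_eq_0_iff2)
    then have "x3 = x4" using s3 s4 by simp
    moreover have "qS x0 x1 x2 = 0" using qS_zero[OF z] s0 s1 s2 by simp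
    moreover have "sing_R x0 x1 x2 x3 x4"
    proof -
      have "fac (e1, e2, \<not>e3, \<not>e4) x0 x1 x2 x3 x4 = (b0+b1+b2) - (b3+b4)" by (simp add: facf algebra_simps)
      then have h: "fac (e1, e2, \<not>e3, \<not>e4) x0 x1 x2 x3 x4 = 0" using 4 z by simp
      show ?thesis by (rule sing_of[OF assms(4) fe h]) (simp_all add: e y0_def negv_def)
    qed
    ultimately show ?thesis by blast
  qed
qed

end
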